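(* Let $\Lambda$ be a strongly connected finite $k$-graph and let $M$ be the Borel probability measure on $\Lambda^\infty$ with $M(Z(\lambda))=\rho(\Lambda)^{-d(\lambda)}x^\Lambda_{s(\lambda)}$ for all $\lambda$. Suppose $g\in\mathbb{Z}^k\setminus\operatorname{Per}\Lambda$. Then there exist $a\in\mathbb{N}^k\setminus\{0\}$ and $0<K<1$ such that whenever $\mu,\nu\in\Lambda$ satisfy $s(\mu)=s(\nu)$ and $d(\mu)-d(\nu)=g$, we have for all $j\in\mathbb{N}$ \[M\Big(\bigcup_{\lambda\in s(\mu)\Lambda^{ja},\ \Lambda^{\min}(\mu\lambda,\nu\lambda)\neq\emptyset}Z(\mu\lambda)\Big)\le K^jM(Z(\mu)).\]
   Context: A $k$-graph is a countable category $\Lambda$ with a functor $d:\Lambda\to\mathbb{N}^k$ such that whenever $d(\lambda)=m+n$ there are unique $\mu,\nu$ with $d(\mu)=m$, $d(\nu)=n$, $\lambda=\mu\nu$. $\Lambda^n=d^{-1}(n)$, $\Lambda^0$ = vertices, $r,s$ range and source, $v\Lambda^n=\{\lambda\in\Lambda^n:r(\lambda)=v\}$. Standing convention: $\Lambda^{e_i}\neq\emptyset$ for each $i$. Finite: each $\Lambda^n$ finite; strongly connected: $v\Lambda w\neq\emptyset$ for all vertices. $\Lambda^{\min}(\mu,\nu)=\{(\alpha,\beta):\mu\alpha=\nu\beta,\ d(\mu\alpha)=d(\mu)\vee d(\nu)\}$. Coordinate matrices $A_i(v,w)=|v\Lambda^{e_i}w|$, $\rho(\Lambda)^n=\prod_i\rho(A_i)^{n_i}$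 (spectral radii). $x^\Lambda$ is the unique vector in $[0,\infty)^{\Lambda^0}$ with $\sum_vx^\Lambda_v=1$ and $A_ix^\Lambda=\rho(A_i)x^\Lambda$ for all $i$. Infinite paths: degree-preserving functors $x:\Omega_k\to\Lambda$, $\Omega_k=\{(m,n)\in\mathbb{N}^k\times\mathbb{N}^k:m\le n\}$ with $r(m,n)=(m,m)$, $s(m,n)=(n,n)$, $(m,n)(n,p)=(m,p)$, $d(m,n)=n-m$; $\Lambda^\infty$ their set, topologised by the compact open sets $Z(\lambda)=\{x:x(0,d(\lambda))=\lambda\}$; $\sigma^n(x)(p,q)=x(n+p,n+q)$. $\operatorname{Per}\Lambda=\{m-n:\sigma^m(x)=\sigma^n(x)\ \forall x\in\Lambda^\infty\}$. *)

theory Defs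
  imports "HOL-Probability.Probability" "HOL-Library.Function_Algebras"
begin

text \<open>Elements of N^k are encoded as functions nat => nat vanishing at all i >= k.
  Objects (vertices) are identified with their identity morphisms.\<close>

record 'a kgraph =
  mor :: "'a set"
  rng :: "'a \<Rightarrow> 'a"
  src :: "'a \<Rightarrow> 'a"
  cmp :: "'a \<Rightarrow> 'a \<Rightarrow> 'a"
  deg :: "'a \<Rightarrow> nat \<Rightarrow> nat"

definition NK :: "nat \<Rightarrow> (nat \<Rightarrow> nat) set" where
  "NK k = {m. \<forall>i\<ge>k. m i = 0}"

definition ZK :: "nat \<Rightarrow> (nat \<Rightarrow> int) set" where
  "ZK k = {m. \<forall>i\<ge>k. m i = 0}"

definition unitvec :: "nat \<Rightarrow> nat \<Rightarrow> nat" where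
  "unitvec i = (\<lambda>j. if j = i then 1 else 0)"

definition verts :: "'a kgraph \<Rightarrow> 'a set" where
  "verts G = rng G ` mor G"

definition is_kgraph :: "nat \<Rightarrow> 'a kgraph \<Rightarrow> bool" where
  "is_kgraph k G \<longleftrightarrow>
     countable (mor G) \<and>
     (\<forall>\<mu>\<in>mor G. rng G \<mu> \<in> mor G \<and> src G \<mu> \<in> mor G) \<and>
     (\<forall>\<mu>\<in>mor G. rng G (rng G \<mu>) = rng G \<mu> \<and> src G (rng G \<mu>) = rng G \<mu>
                 \<and> rng G (src G \<mu>) = src G \<mu> \<and> src G (src G \<mu>) = src G \<mu>) \<and>
     (\<forall>\<mu>\<in>mor G. cmp G (rng G \<mu>) \<mu> = \<mu> \<and> cmp G \<mu> (src G \<mu>) = \<mu>) \<and>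
     (\<forall>\<mu>\<in>mor G. \<forall>\<nu>\<in>mor G. src G \<mu> = rng G \<nu> \<longrightarrow>
        cmp G \<mu> \<nu> \<in> mor G \<and> rng G (cmp G \<mu> \<nu>) = rng G \<mu> \<and> src G (cmp G \<mu> \<nu>) = src G \<nu>) \<and>
     (\<forall>\<mu>\<in>mor G. \<forall>\<nu>\<in>mor G. \<forall>\<eta>\<in>mor G. src G \<mu> = rng G \<nu> \<longrightarrow> src G \<nu> = rng G \<eta> \<longrightarrow>
        cmp G (cmp G \<mu> \<nu>) \<eta> = cmp G \<mu> (cmp G \<nu> \<eta>)) \<and>
     \<comment> \<open>d is a functor to N^k\<close>
     (\<forall>\<mu>\<in>mor G. deg G \<mu> \<in> NK k) \<and>
     (\<forall>\<mu>\<in>mor G. deg G (rng G \<mu>) = 0) \<and>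
     (\<forall>\<mu>\<in>mor G. \<forall>\<nu>\<in>mor G. src G \<mu> = rng G \<nu> \<longrightarrow> deg G (cmp G \<mu> \<nu>) = deg G \<mu> + deg G \<nu>) \<and>
     \<comment> \<open>unique factorisation property\<close>
     (\<forall>l\<in>mor G. \<forall>m n. deg G l = m + n \<longrightarrow>
        (\<exists>!p. fst p \<in> mor G \<and> snd p \<in> mor G \<and> src G (fst p) = rng G (snd p) \<and>
              deg G (fst p) = m \<and> deg G (snd p) = n \<and> cmp G (fst p) (snd p) = l))"

definition paths_of_deg :: "'a kgraph \<Rightarrow> (nat \<Rightarrow> nat) \<Rightarrow> 'a set" where
  "paths_of_deg G n = {l\<in>mor G. deg G l = n}"

definition standing_conv :: "nat \<Rightarrow> 'a kgraph \<Rightarrow> bool" where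
  "standing_conv k G \<longleftrightarrow> (\<forall>i<k. paths_of_deg G (unitvec i) \<noteq> {})"

definition finite_kgraph :: "'a kgraph \<Rightarrow> bool" where
  "finite_kgraph G \<longleftrightarrow> (\<forall>n. finite (paths_of_deg G n))"

definition strongly_connected :: "'a kgraph \<Rightarrow> bool" where
  "strongly_connected G \<longleftrightarrow>
     (\<forall>v\<in>verts G. \<forall>w\<in>verts G. \<exists>l\<in>mor G. rng G l = v \<and> src G l = w)"

definition Lmin :: "'a kgraph \<Rightarrow> 'a \<Rightarrow> 'a \<Rightarrow> ('a \<times> 'a) set" where
  "Lmin G \<mu> \<nu> = {(\<alpha>, \<beta>). \<alpha> \<in> mor G \<and> \<beta> \<in> mor G \<and> src G \<mu> = rng G \<alpha> \<and> src G \<nu> = rng G \<beta> \<and>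
      cmp G \<mu> \<alpha> = cmp G \<nu> \<beta> \<and> deg G (cmp G \<mu> \<alpha>) = (\<lambda>i. max (deg G \<mu> i) (deg G \<nu> i))}"

definition coord_mat :: "'a kgraph \<Rightarrow> nat \<Rightarrow> 'a \<Rightarrow> 'a \<Rightarrow> nat" where
  "coord_mat G i v w = card {l\<in>paths_of_deg G (unitvec i). rng G l = v \<and> src G l = w}"

definition eigenvalues_on :: "'a set \<Rightarrow> ('a \<Rightarrow> 'a \<Rightarrow> nat) \<Rightarrow> complex set" where
  "eigenvalues_on V A = {c. \<exists>z::'a \<Rightarrow> complex. (\<exists>v\<in>V. z v \<noteq> 0) \<and>
      (\<forall>v\<in>V. (\<Sum>w\<in>V. of_nat (A v w) * z w) = c * z v)}"

definition spec_rad :: "'a set \<Rightarrow> ('a \<Rightarrow> 'a \<Rightarrow> nat) \<Rightarrow> real" where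
  "spec_rad V A = Sup (cmod ` eigenvalues_on V A)"

definition rho :: "'a kgraph \<Rightarrow> nat \<Rightarrow> real" where
  "rho G i = spec_rad (verts G) (coord_mat G i)"

definition is_PF_vector :: "nat \<Rightarrow> 'a kgraph \<Rightarrow> ('a \<Rightarrow> real) \<Rightarrow> bool" where
  "is_PF_vector k G x \<longleftrightarrow>
     (\<forall>v\<in>verts G. 0 \<le> x v) \<and> (\<Sum>v\<in>verts G. x v) = 1 \<and>
     (\<forall>i<k. \<forall>v\<in>verts G. (\<Sum>w\<in>verts G. real (coord_mat G i v w) * x w) = rho G i * x v)"

definition Omega :: "nat \<Rightarrow> ((nat \<Rightarrow> nat) \<times> (nat \<Rightarrow> nat)) set" where
  "Omega k = {(m, n). m \<in> NK k \<and> n \<in> NK k \<and> m \<le> n}"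

text \<open>Degree-preserving functors Omega_k -> Lambda; values off Omega_k are fixed
  to undefined so that paths are determined by their values on Omega_k.\<close>
definition inf_paths :: "nat \<Rightarrow> 'a kgraph \<Rightarrow> ((nat \<Rightarrow> nat) \<times> (nat \<Rightarrow> nat) \<Rightarrow> 'a) set" where
  "inf_paths k G = {x.
     (\<forall>p. p \<notin> Omega k \<longrightarrow> x p = undefined) \<and>
     (\<forall>(m, n)\<in>Omega k. x (m, n) \<in> mor G \<and> deg G (x (m, n)) = n - m \<and>
          rng G (x (m, n)) = x (m, m) \<and> src G (x (m, n)) = x (n, n)) \<and>
     (\<forall>m n p. (m, n) \<in> Omega k \<longrightarrow> (n, p) \<in> Omega k \<longrightarrow>
          x (m, p) = cmp G (x (m, n)) (x (n, p)))}"

definition cyl :: "nat \<Rightarrow> 'a kgraph \<Rightarrow> 'a \<Rightarrow> ((nat \<Rightarrow> nat) \<times> (nat \<Rightarrow> nat) \<Rightarrow> 'a) set" where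
  "cyl k G l = {x \<in> inf_paths k G. x (0, deg G l) = l}"

definition path_topology :: "nat \<Rightarrow> 'a kgraph \<Rightarrow> ((nat \<Rightarrow> nat) \<times> (nat \<Rightarrow> nat) \<Rightarrow> 'a) topology" where
  "path_topology k G = topology_generated_by (cyl k G ` mor G)"

definition path_borel_sets :: "nat \<Rightarrow> 'a kgraph \<Rightarrow> ((nat \<Rightarrow> nat) \<times> (nat \<Rightarrow> nat) \<Rightarrow> 'a) set set" where
  "path_borel_sets k G = sigma_sets (inf_paths k G) {U. openin (path_topology k G) U}"

definition shift :: "nat \<Rightarrow> (nat \<Rightarrow> nat) \<Rightarrow> ((nat \<Rightarrow> nat) \<times> (nat \<Rightarrow> nat) \<Rightarrow> 'a)
    \<Rightarrow> ((nat \<Rightarrow> nat) \<times> (nat \<Rightarrow> nat) \<Rightarrow> 'a)" where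
  "shift k n x = (\<lambda>(p, q). if (p, q) \<in> Omega k then x (n + p, n + q) else undefined)"

definition Per :: "nat \<Rightarrow> 'a kgraph \<Rightarrow> (nat \<Rightarrow> int) set" where
  "Per k G = {(\<lambda>i. int (m i) - int (n i)) | m n. m \<in> NK k \<and> n \<in> NK k \<and>
                (\<forall>x\<in>inf_paths k G. shift k m x = shift k n x)}"

end

theory Submission
  imports Defs
begin


locale kgr = fixes k :: nat and G :: "'a kgraph" assumes kg: "is_kgraph k G"
begin

lemma mor_rng[simp]: "\<mu> \<in> mor G \<Longrightarrow> rng G \<mu> \<in> mor G"
  and mor_src[simp]: "\<mu> \<in> mor G \<Longrightarrow> src G \<mu> \<in> mor G"
  and rng_rng[simp]: "\<mu> \<in> mor G \<Longrightarrow> rng G (rng G \<mu>) = rng G \<mu>"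
  and src_rng[simp]: "\<mu> \<in> mor G \<Longrightarrow> src G (rng G \<mu>) = rng G \<mu>"
  and rng_src[simp]: "\<mu> \<in> mor G \<Longrightarrow> rng G (src G \<mu>) = src G \<mu>"
  and src_src[simp]: "\<mu> \<in> mor G \<Longrightarrow> src G (src G \<mu>) = src G \<mu>"
  and cmp_rng[simp]: "\<mu> \<in> mor G \<Longrightarrow> cmp G (rng G \<mu>) \<mu> = \<mu>"
  and cmp_src[simp]: "\<mu> \<in> mor G \<Longrightarrow> cmp G \<mu> (src G \<mu>) = \<mu>"
  and deg_NK: "\<mu> \<in> mor G \<Longrightarrow> deg G \<mu> \<in> NK k"
  and deg_rng[simp]: "\<mu> \<in> mor G \<Longrightarrow> deg G (rng G \<mu>) = 0"
  using kg unfolding is_kgraph_def by auto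

lemma deg_src[simp]: "\<mu> \<in> mor G \<Longrightarrow> deg G (src G \<mu>) = 0"
  by (metis deg_rng mor_src rng_src)

lemma cmp_mor[simp]: "\<mu> \<in> mor G \<Longrightarrow> \<nu> \<in> mor G \<Longrightarrow> src G \<mu> = rng G \<nu> \<Longrightarrow> cmp G \<mu> \<nu> \<in> mor G"
  and rng_cmp[simp]: "\<mu> \<in> mor G \<Longrightarrow> \<nu> \<in> mor G \<Longrightarrow> src G \<mu> = rng G \<nu> \<Longrightarrow> rng G (cmp G \<mu> \<nu>) = rng G \<mu>"
  and src_cmp[simp]: "\<mu> \<in> mor G \<Longrightarrow> \<nu> \<in> mor G \<Longrightarrow> src G \<mu> = rng G \<nu> \<Longrightarrow> src G (cmp G \<mu> \<nu>) = src G \<nu>"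
  and deg_cmp[simp]: "\<mu> \<in> mor G \<Longrightarrow> \<nu> \<in> mor G \<Longrightarrow> src G \<mu> = rng G \<nu> \<Longrightarrow> deg G (cmp G \<mu> \<nu>) = deg G \<mu> + deg G \<nu>"
  using kg unfolding is_kgraph_def by auto

lemma assoc[simp]: "\<mu> \<in> mor G \<Longrightarrow> \<nu> \<in> mor G \<Longrightarrow> \<eta> \<in> mor G \<Longrightarrow> src G \<mu> = rng G \<nu> \<Longrightarrow> src G \<nu> = rng G \<eta> \<Longrightarrow>
        cmp G (cmp G \<mu> \<nu>) \<eta> = cmp G \<mu> (cmp G \<nu> \<eta>)"
  using kg unfolding is_kgraph_def by auto

lemma uf: "\<forall>l\<in>mor G. \<forall>m n. deg G l = m + n \<longrightarrow>
        (\<exists>!p. fst p \<in> mor G \<and> snd p \<in> mor G \<and> src G (fst p) = rng G (snd p) \<and>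
              deg G (fst p) = m \<and> deg G (snd p) = n \<and> cmp G (fst p) (snd p) = l)"
  using kg unfolding is_kgraph_def by (elim conjE) assumption

lemma fact_exists:
  assumes "l \<in> mor G" "deg G l = m + n"
  obtains \<alpha> \<beta> where "\<alpha> \<in> mor G" "\<beta> \<in> mor G" "src G \<alpha> = rng G \<beta>" "deg G \<alpha> = m" "deg G \<beta> = n" "cmp G \<alpha> \<beta> = l"
proof -
  from uf assms have "\<exists>!p. fst p \<in> mor G \<and> snd p \<in> mor G \<and> src G (fst p) = rng G (snd p) \<and>
              deg G (fst p) = m \<and> deg G (snd p) = n \<and> cmp G (fst p) (snd p) = l"
    by blast
  then obtain p where "fst p \<in> mor G \<and> snd p \<in> mor G \<and> src G (fst p) = rng G (snd p) \<and>
              deg G (fst p) = m \<and> deg G (snd p) = n \<and> cmp G (fst p) (snd p) = l" by blast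
  then show ?thesis using that by blast
qed

lemma fact_unique:
  assumes "\<alpha>1 \<in> mor G" "\<beta>1 \<in> mor G" "src G \<alpha>1 = rng G \<beta>1"
    "\<alpha>2 \<in> mor G" "\<beta>2 \<in> mor G" "src G \<alpha>2 = rng G \<beta>2"
    "cmp G \<alpha>1 \<beta>1 = cmp G \<alpha>2 \<beta>2" "deg G \<alpha>1 = deg G \<alpha>2" "deg G \<beta>1 = deg G \<beta>2"
  shows "\<alpha>1 = \<alpha>2 \<and> \<beta>1 = \<beta>2"
proof -
  let ?l = "cmp G \<alpha>1 \<beta>1"
  have "?l \<in> mor G" "deg G ?l = deg G \<alpha>1 + deg G \<beta>1" using assms by auto
  with uf have "\<exists>!p. fst p \<in> mor G \<and> snd p \<in> mor G \<and> src G (fst p) = rng G (snd p) \<and>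
              deg G (fst p) = deg G \<alpha>1 \<and> deg G (snd p) = deg G \<beta>1 \<and> cmp G (fst p) (snd p) = ?l"
    by blast
  then have "(\<alpha>1,\<beta>1) = (\<alpha>2,\<beta>2)" using assms by (metis fst_conv snd_conv)
  then show ?thesis by simp
qed

lemma cancel3:
  assumes "A \<in> mor G" "\<rho> \<in> mor G" "B \<in> mor G" "src G A = rng G \<rho>" "src G \<rho> = rng G B"
    "A' \<in> mor G" "\<rho>' \<in> mor G" "B' \<in> mor G" "src G A' = rng G \<rho>'" "src G \<rho>' = rng G B'"
    "cmp G A (cmp G \<rho> B) = cmp G A' (cmp G \<rho>' B')" "deg G A = deg G A'" "deg G \<rho> = deg G \<rho>'"
  shows "\<rho> = \<rho>'"
proof -
  have e: "cmp G (cmp G A \<rho>) B = cmp G (cmp G A' \<rho>') B'" using assms by simp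
  have "deg G (cmp G (cmp G A \<rho>) B) = deg G (cmp G (cmp G A' \<rho>') B')" using e by simp
  moreover have "deg G (cmp G (cmp G A \<rho>) B) = (deg G A + deg G \<rho>) + deg G B" using assms(1-5) by (simp add: add.assoc)
  moreover have "deg G (cmp G (cmp G A' \<rho>') B') = (deg G A + deg G \<rho>) + deg G B'" using assms(6-10,12,13) by (simp add: add.assoc)
  ultimately have "(deg G A + deg G \<rho>) + deg G B = (deg G A + deg G \<rho>) + deg G B'" by simp
  then have dB: "deg G B = deg G B'" by (rule add_left_imp_eq)
  have "cmp G A \<rho> = cmp G A' \<rho>'" using fact_unique[of "cmp G A \<rho>" B "cmp G A' \<rho>'" B'] assms e dB by simp
  then show ?thesis using fact_unique[of A \<rho> A' \<rho>'] assms by simp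
qed

lemma verts_iff: "v \<in> verts G \<longleftrightarrow> v \<in> mor G \<and> rng G v = v"
  unfolding verts_def by (auto intro: image_eqI[where x=v])

lemma src_verts[simp]: "\<mu> \<in> mor G \<Longrightarrow> src G \<mu> \<in> verts G"
  and rng_verts[simp]: "\<mu> \<in> mor G \<Longrightarrow> rng G \<mu> \<in> verts G"
  by (auto simp: verts_iff)

lemma deg0: "l \<in> mor G \<Longrightarrow> deg G l = 0 \<Longrightarrow> l = rng G l"
  using fact_unique[of "rng G l" l l "src G l"] by simp

lemma edge_exists:
  assumes conv: "standing_conv k G" and sc: "strongly_connected G" and i: "i < k" and v: "v \<in> verts G"
  shows "\<exists>e\<in>mor G. rng G e = v \<and> deg G e = unitvec i"
proof -
  obtain e where e: "e \<in> mor G" "deg G e = unitvec i" using conv i unfolding standing_conv_def paths_of_deg_def by auto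
  obtain t where t: "t \<in> mor G" "rng G t = v" "src G t = rng G e" using sc v e rng_verts[OF e(1)] unfolding strongly_connected_def by blast
  have "cmp G t e \<in> mor G" "deg G (cmp G t e) = unitvec i + deg G t" using t e by (auto simp: add.commute)
  then obtain a b where ab: "a \<in> mor G" "b \<in> mor G" "src G a = rng G b" "deg G a = unitvec i" "cmp G a b = cmp G t e"
    by (rule fact_exists)
  have "rng G a = v" using ab t e by (metis rng_cmp)
  then show ?thesis using ab by blast
qed

lemma path_exists_aux:
  assumes conv: "standing_conv k G" and sc: "strongly_connected G"
  shows "\<forall>d v. d \<in> NK k \<longrightarrow> v \<in> verts G \<longrightarrow> sum d {..<k} = s \<longrightarrow> (\<exists>\<xi>\<in>mor G. rng G \<xi> = v \<and> deg G \<xi> = d)"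
proof (induction s)
  case 0
  show ?case
  proof (intro allI impI)
    fix d v assume d: "d \<in> NK k" and v: "v \<in> verts G" and s: "sum d {..<k} = 0"
    have z: "\<forall>i\<in>{..<k}. d i = 0" using s by simp
    have "d = 0"
    proof (rule ext)
      fix i show "d i = 0 i"
      proof (cases "i < k")
        case True then show ?thesis using z by simp
      next
        case False then show ?thesis using d unfolding NK_def by simp
      qed
    qed
    moreover have "v \<in> mor G" "rng G v = v" using v by (simp_all add: verts_iff)
    moreover have "deg G v = 0" using deg_rng[of v] calculation by simp
    ultimately show "\<exists>\<xi>\<in>mor G. rng G \<xi> = v \<and> deg G \<xi> = d" by blast
  qed
next
  case (Suc s)
  show ?case
  proof (intro allI impI)
    fix d v assume d: "d \<in> NK k" and v: "v \<in> verts G" and s: "sum d {..<k} = Suc s"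
    have "\<not> (\<forall>i\<in>{..<k}. d i = 0)"
    proof
      assume "\<forall>i\<in>{..<k}. d i = 0"
      then have "sum d {..<k} = 0" by simp
      with s show False by simp
    qed
    then obtain i where i: "i < k" "d i > 0" by auto
    define d' where "d' = d(i := d i - 1)"
    have d'NK: "d' \<in> NK k" using d i unfolding NK_def d'_def by auto
    have A1: "sum d {..<k} = d i + sum d ({..<k} - {i})" using i by (simp add: sum.remove)
    have A2: "sum d' {..<k} = d' i + sum d' ({..<k} - {i})" using i by (simp add: sum.remove)
    have A3: "sum d' ({..<k} - {i}) = sum d ({..<k} - {i})" unfolding d'_def by (rule sum.cong) auto
    have "d' i = d i - 1" unfolding d'_def by simp
    then have "sum d' {..<k} = s" using s i A1 A2 A3 by linarith
    then obtain \<xi> where xi: "\<xi> \<in> mor G" "rng G \<xi> = v" "deg G \<xi> = d'" using Suc.IH d'NK v by blast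
    obtain e where e: "e \<in> mor G" "rng G e = src G \<xi>" "deg G e = unitvec i"
      using edge_exists[OF conv sc i(1), of "src G \<xi>"] xi by auto
    have "deg G (cmp G \<xi> e) = d' + unitvec i" using xi e by simp
    also have "d' + unitvec i = d"
    proof (rule ext)
      fix j show "(d' + unitvec i) j = d j" using i unfolding d'_def unitvec_def by simp
    qed
    finally have "deg G (cmp G \<xi> e) = d" .
    moreover have "cmp G \<xi> e \<in> mor G" "rng G (cmp G \<xi> e) = v" using xi e by simp_all
    ultimately show "\<exists>\<xi>\<in>mor G. rng G \<xi> = v \<and> deg G \<xi> = d" by blast
  qed
qed

lemma path_exists:
  assumes conv: "standing_conv k G" and sc: "strongly_connected G" "d \<in> NK k" "v \<in> verts G"
  shows "\<exists>\<xi>\<in>mor G. rng G \<xi> = v \<and> deg G \<xi> = d"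
  using path_exists_aux[OF conv sc(1)] sc by blast


end

context kgr begin
lemma Omega_iff: "(m, n) \<in> Omega k \<longleftrightarrow> m \<in> NK k \<and> n \<in> NK k \<and> m \<le> n"
  unfolding Omega_def by simp

lemma NK_add[simp]: "m \<in> NK k \<Longrightarrow> n \<in> NK k \<Longrightarrow> m + n \<in> NK k"
  unfolding NK_def by simp

lemma NK_0[simp]: "0 \<in> NK k" unfolding NK_def by simp

lemma ip_parts:
  assumes "y \<in> inf_paths k G"
  shows "\<forall>(m, n)\<in>Omega k. y (m, n) \<in> mor G \<and> deg G (y (m, n)) = n - m \<and>
          rng G (y (m, n)) = y (m, m) \<and> src G (y (m, n)) = y (n, n)"
    and "\<forall>m n p. (m, n) \<in> Omega k \<longrightarrow> (n, p) \<in> Omega k \<longrightarrow> y (m, p) = cmp G (y (m, n)) (y (n, p))"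
    and "\<forall>p. p \<notin> Omega k \<longrightarrow> y p = undefined"
proof -
  have H: "(\<forall>p. p \<notin> Omega k \<longrightarrow> y p = undefined) \<and>
     (\<forall>(m, n)\<in>Omega k. y (m, n) \<in> mor G \<and> deg G (y (m, n)) = n - m \<and>
          rng G (y (m, n)) = y (m, m) \<and> src G (y (m, n)) = y (n, n)) \<and>
     (\<forall>m n p. (m, n) \<in> Omega k \<longrightarrow> (n, p) \<in> Omega k \<longrightarrow>
          y (m, p) = cmp G (y (m, n)) (y (n, p)))" using assms unfolding inf_paths_def mem_Collect_eq .
  show "\<forall>(m, n)\<in>Omega k. y (m, n) \<in> mor G \<and> deg G (y (m, n)) = n - m \<and>
          rng G (y (m, n)) = y (m, m) \<and> src G (y (m, n)) = y (n, n)" using conjunct1[OF conjunct2[OF H]] .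
  show "\<forall>m n p. (m, n) \<in> Omega k \<longrightarrow> (n, p) \<in> Omega k \<longrightarrow> y (m, p) = cmp G (y (m, n)) (y (n, p))"
    using conjunct2[OF conjunct2[OF H]] .
  show "\<forall>p. p \<notin> Omega k \<longrightarrow> y p = undefined" using conjunct1[OF H] .
qed

lemma ip_facts:
  assumes "y \<in> inf_paths k G" "m \<in> NK k" "n \<in> NK k" "m \<le> n"
  shows "y (m, n) \<in> mor G" "deg G (y (m, n)) = n - m" "rng G (y (m, n)) = y (m, m)" "src G (y (m, n)) = y (n, n)"
proof -
  have "(m, n) \<in> Omega k" using assms by (simp add: Omega_iff)
  with ip_parts(1)[OF assms(1)] have "y (m, n) \<in> mor G \<and> deg G (y (m, n)) = n - m \<and>
          rng G (y (m, n)) = y (m, m) \<and> src G (y (m, n)) = y (n, n)" by fast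
  then show "y (m, n) \<in> mor G" "deg G (y (m, n)) = n - m" "rng G (y (m, n)) = y (m, m)" "src G (y (m, n)) = y (n, n)"
    by simp_all
qed

lemma ip_cmp:
  assumes "y \<in> inf_paths k G" "m \<in> NK k" "n \<in> NK k" "p \<in> NK k" "m \<le> n" "n \<le> p"
  shows "y (m, p) = cmp G (y (m, n)) (y (n, p))"
proof -
  have "(m, n) \<in> Omega k" "(n, p) \<in> Omega k" using assms by (simp_all add: Omega_iff)
  with ip_parts(2)[OF assms(1)] show ?thesis by blast
qed

lemma witness:
  assumes y: "y \<in> inf_paths k G" and m: "m \<in> NK k" and n: "n \<in> NK k" and ne: "shift k m y \<noteq> shift k n y"
  obtains \<gamma>1 \<rho>1 \<xi>1 \<gamma>2 \<rho>2 \<xi>2 where "\<gamma>1 \<in> mor G" "\<rho>1 \<in> mor G" "\<xi>1 \<in> mor G"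
     "\<gamma>2 \<in> mor G" "\<rho>2 \<in> mor G" "\<xi>2 \<in> mor G"
     "src G \<gamma>1 = rng G \<rho>1" "src G \<rho>1 = rng G \<xi>1" "src G \<gamma>2 = rng G \<rho>2" "src G \<rho>2 = rng G \<xi>2"
     "cmp G \<gamma>1 (cmp G \<rho>1 \<xi>1) = cmp G \<gamma>2 (cmp G \<rho>2 \<xi>2)"
     "deg G \<gamma>1 + n = deg G \<gamma>2 + m" "deg G \<rho>1 = deg G \<rho>2" "\<rho>1 \<noteq> \<rho>2"
proof -
  obtain P Q where PQ: "shift k m y (P, Q) \<noteq> shift k n y (P, Q)" using ne by (auto simp: fun_eq_iff)
  then have O: "(P, Q) \<in> Omega k" unfolding shift_def by (cases "(P, Q) \<in> Omega k") simp_all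
  then have P: "P \<in> NK k" and Q: "Q \<in> NK k" and PQle: "P \<le> Q" by (auto simp: Omega_iff)
  have ne2: "y (m + P, m + Q) \<noteq> y (n + P, n + Q)" using PQ O unfolding shift_def by simp
  define T where "T = m + n + Q"
  have T: "T \<in> NK k" using m n Q unfolding T_def by simp
  have le1: "m + P \<le> m + Q" "n + P \<le> n + Q" using PQle by (simp_all add: add_left_mono)
  have le2: "m + Q \<le> T" "n + Q \<le> T" unfolding T_def le_fun_def by simp_all
  have le3: "0 \<le> m + P" "0 \<le> n + P" by (simp_all add: le_fun_def)
  have le4: "m + P \<le> T" "n + P \<le> T" using order.trans[OF le1(1) le2(1)] order.trans[OF le1(2) le2(2)] by simp_all
  have NKs: "m + P \<in> NK k" "m + Q \<in> NK k" "n + P \<in> NK k" "n + Q \<in> NK k" using m n P Q by simp_all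
  define \<gamma>1 where "\<gamma>1 = y (0, m + P)"
  define \<rho>1 where "\<rho>1 = y (m + P, m + Q)"
  define \<xi>1 where "\<xi>1 = y (m + Q, T)"
  define \<gamma>2 where "\<gamma>2 = y (0, n + P)"
  define \<rho>2 where "\<rho>2 = y (n + P, n + Q)"
  define \<xi>2 where "\<xi>2 = y (n + Q, T)"
  note F = ip_facts[OF y]
  have mors: "\<gamma>1 \<in> mor G" "\<rho>1 \<in> mor G" "\<xi>1 \<in> mor G" "\<gamma>2 \<in> mor G" "\<rho>2 \<in> mor G" "\<xi>2 \<in> mor G"
    unfolding \<gamma>1_def \<rho>1_def \<xi>1_def \<gamma>2_def \<rho>2_def \<xi>2_def
    by (rule F(1); (rule NK_0 NKs T le1 le2 le3)?)+
  have comp: "src G \<gamma>1 = rng G \<rho>1" "src G \<rho>1 = rng G \<xi>1" "src G \<gamma>2 = rng G \<rho>2" "src G \<rho>2 = rng G \<xi>2"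
    unfolding \<gamma>1_def \<rho>1_def \<xi>1_def \<gamma>2_def \<rho>2_def \<xi>2_def
    using F(4)[OF NK_0 NKs(1) le3(1)] F(3)[OF NKs(1) NKs(2) le1(1)] F(4)[OF NKs(1) NKs(2) le1(1)] F(3)[OF NKs(2) T le2(1)]
      F(4)[OF NK_0 NKs(3) le3(2)] F(3)[OF NKs(3) NKs(4) le1(2)] F(4)[OF NKs(3) NKs(4) le1(2)] F(3)[OF NKs(4) T le2(2)]
    by simp_all
  have e1: "y (0, T) = cmp G \<gamma>1 (cmp G \<rho>1 \<xi>1)"
  proof -
    have "y (0, T) = cmp G (y (0, m + P)) (y (m + P, T))" by (rule ip_cmp[OF y]) (simp_all add: NKs T le3 le4)
    moreover have "y (m + P, T) = cmp G (y (m + P, m + Q)) (y (m + Q, T))" by (rule ip_cmp[OF y]) (simp_all add: NKs T le1 le2 PQle)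
    ultimately show ?thesis unfolding \<gamma>1_def \<rho>1_def \<xi>1_def by simp
  qed
  have e2: "y (0, T) = cmp G \<gamma>2 (cmp G \<rho>2 \<xi>2)"
  proof -
    have "y (0, T) = cmp G (y (0, n + P)) (y (n + P, T))" by (rule ip_cmp[OF y]) (simp_all add: NKs T le3 le4)
    moreover have "y (n + P, T) = cmp G (y (n + P, n + Q)) (y (n + Q, T))" by (rule ip_cmp[OF y]) (simp_all add: NKs T le1 le2 PQle)
    ultimately show ?thesis unfolding \<gamma>2_def \<rho>2_def \<xi>2_def by simp
  qed
  have dg: "deg G \<gamma>1 = m + P - 0" "deg G \<gamma>2 = n + P - 0" "deg G \<rho>1 = m + Q - (m + P)" "deg G \<rho>2 = n + Q - (n + P)"
    unfolding \<gamma>1_def \<rho>1_def \<gamma>2_def \<rho>2_def by (simp_all add: F(2) NKs le1 le3 PQle)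
  have d1: "deg G \<gamma>1 + n = deg G \<gamma>2 + m" unfolding dg by (simp add: fun_eq_iff)
  have d2: "deg G \<rho>1 = deg G \<rho>2" unfolding dg by (simp add: fun_eq_iff)
  show ?thesis
    by (rule that[OF mors comp]) (use e1 e2 d1 d2 ne2 in \<open>simp_all add: \<rho>1_def \<rho>2_def\<close>)
qed

lemma core:
  assumes mors: "\<mu> \<in> mor G" "\<nu> \<in> mor G" "\<theta> \<in> mor G" "R1 \<in> mor G" "R2 \<in> mor G"
    "\<gamma>1 \<in> mor G" "\<rho>1 \<in> mor G" "\<xi>1 \<in> mor G" "\<gamma>2 \<in> mor G" "\<rho>2 \<in> mor G" "\<xi>2 \<in> mor G"
  and comp: "src G \<mu> = rng G \<theta>" "src G \<nu> = rng G \<theta>" "src G \<theta> = rng G \<gamma>1"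
    "src G \<gamma>1 = rng G \<rho>1" "src G \<rho>1 = rng G \<xi>1" "src G \<gamma>2 = rng G \<rho>2" "src G \<rho>2 = rng G \<xi>2"
    "src G \<xi>1 = rng G R1" "src G \<xi>1 = rng G R2"
  and eta: "cmp G \<gamma>1 (cmp G \<rho>1 \<xi>1) = cmp G \<gamma>2 (cmp G \<rho>2 \<xi>2)"
  and Z: "cmp G \<mu> (cmp G \<theta> (cmp G (cmp G \<gamma>1 (cmp G \<rho>1 \<xi>1)) R1)) =
          cmp G \<nu> (cmp G \<theta> (cmp G (cmp G \<gamma>1 (cmp G \<rho>1 \<xi>1)) R2))"
  and dg: "deg G \<mu> + deg G \<gamma>2 = deg G \<nu> + deg G \<gamma>1" "deg G \<rho>1 = deg G \<rho>2"
  shows "\<rho>1 = \<rho>2"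
proof -
  have r2: "rng G \<gamma>2 = rng G \<gamma>1"
    using rng_cmp[of \<gamma>1 "cmp G \<rho>1 \<xi>1"] rng_cmp[of \<gamma>2 "cmp G \<rho>2 \<xi>2"] eta mors comp by simp
  have s2: "src G \<xi>2 = src G \<xi>1"
    using src_cmp[of \<gamma>1 "cmp G \<rho>1 \<xi>1"] src_cmp[of \<gamma>2 "cmp G \<rho>2 \<xi>2"] eta mors comp by simp
  have L: "cmp G \<mu> (cmp G \<theta> (cmp G (cmp G \<gamma>1 (cmp G \<rho>1 \<xi>1)) R1)) =
        cmp G (cmp G \<mu> (cmp G \<theta> \<gamma>2)) (cmp G \<rho>2 (cmp G \<xi>2 R1))"
    unfolding eta using mors comp r2 s2 by simp
  have R: "cmp G \<nu> (cmp G \<theta> (cmp G (cmp G \<gamma>1 (cmp G \<rho>1 \<xi>1)) R2)) =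
        cmp G (cmp G \<nu> (cmp G \<theta> \<gamma>1)) (cmp G \<rho>1 (cmp G \<xi>1 R2))"
    using mors comp by simp
  have dA: "deg G (cmp G \<mu> (cmp G \<theta> \<gamma>2)) = deg G \<mu> + (deg G \<theta> + deg G \<gamma>2)"
    using mors comp r2 by simp
  have dA': "deg G (cmp G \<nu> (cmp G \<theta> \<gamma>1)) = deg G \<nu> + (deg G \<theta> + deg G \<gamma>1)"
    using mors comp by simp
  have "deg G \<mu> + (deg G \<theta> + deg G \<gamma>2) = deg G \<theta> + (deg G \<mu> + deg G \<gamma>2)" by (simp add: algebra_simps)
  also have "\<dots> = deg G \<theta> + (deg G \<nu> + deg G \<gamma>1)" by (simp only: dg(1))
  also have "\<dots> = deg G \<nu> + (deg G \<theta> + deg G \<gamma>1)" by (simp add: algebra_simps)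
  finally have dd: "deg G (cmp G \<mu> (cmp G \<theta> \<gamma>2)) = deg G (cmp G \<nu> (cmp G \<theta> \<gamma>1))" unfolding dA dA' .
  have c1: "cmp G \<mu> (cmp G \<theta> \<gamma>2) \<in> mor G" "src G (cmp G \<mu> (cmp G \<theta> \<gamma>2)) = rng G \<rho>2"
    "cmp G \<xi>2 R1 \<in> mor G" "src G \<rho>2 = rng G (cmp G \<xi>2 R1)" using mors comp r2 s2 by simp_all
  have c2: "cmp G \<nu> (cmp G \<theta> \<gamma>1) \<in> mor G" "src G (cmp G \<nu> (cmp G \<theta> \<gamma>1)) = rng G \<rho>1"
    "cmp G \<xi>1 R2 \<in> mor G" "src G \<rho>1 = rng G (cmp G \<xi>1 R2)" using mors comp by simp_all
  have "\<rho>2 = \<rho>1"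
    by (rule cancel3[OF c1(1) mors(10) c1(3) c1(2) c1(4) c2(1) mors(7) c2(3) c2(2) c2(4) _ dd dg(2)[symmetric]])
      (use Z L R in simp)
  then show ?thesis by simp
qed

end


lemma sum_fun_apply: "(\<Sum>v\<in>V. f v) (i::nat) = (\<Sum>v\<in>V. (f v i :: nat))"
  by (induction V rule: infinite_finite_induct) auto

locale kgm = kgr k G for k :: nat and G :: "'a kgraph" +
  fixes x :: "'a \<Rightarrow> real" and M :: "((nat \<Rightarrow> nat) \<times> (nat \<Rightarrow> nat) \<Rightarrow> 'a) measure"
  assumes conv: "standing_conv k G"
    and fin: "finite_kgraph G" and sc: "strongly_connected G"
    and PF: "is_PF_vector k G x"
    and prob: "prob_space M"
    and spaceM: "space M = inf_paths k G"
    and setsM: "sets M = path_borel_sets k G"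
    and MZ0: "\<And>l. l \<in> mor G \<Longrightarrow>
       measure M (cyl k G l) = (\<Prod>i<k. inverse (rho G i) ^ deg G l i) * x (src G l)"
begin

interpretation P: prob_space M by (rule prob)

definition cf :: "(nat \<Rightarrow> nat) \<Rightarrow> real" where
  "cf d = (\<Prod>i<k. inverse (rho G i) ^ d i)"

lemma MZ: "l \<in> mor G \<Longrightarrow> measure M (cyl k G l) = cf (deg G l) * x (src G l)"
  using MZ0 unfolding cf_def by simp

lemma cf_add: "cf (d1 + d2) = cf d1 * cf d2"
  unfolding cf_def by (simp add: power_add prod.distrib)

lemma cf_0: "cf 0 = 1" unfolding cf_def by simp

lemma cyl_sets: "l \<in> mor G \<Longrightarrow> cyl k G l \<in> sets M"
  unfolding setsM path_borel_sets_def path_topology_def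
  by (rule sigma_sets.Basic) (simp add: topology_generated_by_Basis)

lemma cyl_disj: "deg G l1 = deg G l2 \<Longrightarrow> l1 \<noteq> l2 \<Longrightarrow> cyl k G l1 \<inter> cyl k G l2 = {}"
  unfolding cyl_def by auto

lemma cyl_sub: 
  assumes "l \<in> mor G" "t \<in> mor G" "src G l = rng G t"
  shows "cyl k G (cmp G l t) \<subseteq> cyl k G l"
proof
  fix y assume y: "y \<in> cyl k G (cmp G l t)"
  then have yi: "y \<in> inf_paths k G" and y0: "y (0, deg G l + deg G t) = cmp G l t" using assms unfolding cyl_def by auto
  have NK: "deg G l \<in> NK k" "deg G t \<in> NK k" using assms deg_NK by auto
  have le: "0 \<le> deg G l" "deg G l \<le> deg G l + deg G t" by (simp_all add: le_fun_def)
  have e: "y (0, deg G l + deg G t) = cmp G (y (0, deg G l)) (y (deg G l, deg G l + deg G t))"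
    by (rule ip_cmp[OF yi]) (use NK le in simp_all)
  have F: "y (0, deg G l) \<in> mor G" "y (deg G l, deg G l + deg G t) \<in> mor G"
     "src G (y (0, deg G l)) = rng G (y (deg G l, deg G l + deg G t))"
     "deg G (y (0, deg G l)) = deg G l" "deg G (y (deg G l, deg G l + deg G t)) = deg G t"
    using ip_facts[OF yi NK_0 NK(1) le(1)] ip_facts[OF yi NK(1) _ le(2)] NK by (simp_all add: fun_eq_iff)
  have "y (0, deg G l) = l" using fact_unique[OF F(1,2,3) assms(1,2,3)] e y0 F(4,5) by simp
  then show "y \<in> cyl k G l" using yi unfolding cyl_def by simp
qed

lemma cyl_decomp:
  assumes "l \<in> mor G" "d \<in> NK k"
  shows "cyl k G l = (\<Union>t\<in>{t\<in>paths_of_deg G d. rng G t = src G l}. cyl k G (cmp G l t))"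
proof
  show "(\<Union>t\<in>{t\<in>paths_of_deg G d. rng G t = src G l}. cyl k G (cmp G l t)) \<subseteq> cyl k G l"
  proof (rule UN_least)
    fix t assume "t \<in> {t\<in>paths_of_deg G d. rng G t = src G l}"
    then show "cyl k G (cmp G l t) \<subseteq> cyl k G l" using cyl_sub[OF assms(1), of t] by (simp add: paths_of_deg_def)
  qed
next
  show "cyl k G l \<subseteq> (\<Union>t\<in>{t\<in>paths_of_deg G d. rng G t = src G l}. cyl k G (cmp G l t))"
  proof
    fix y assume y: "y \<in> cyl k G l"
    then have yi: "y \<in> inf_paths k G" and y0: "y (0, deg G l) = l" unfolding cyl_def by auto
    have NK: "deg G l \<in> NK k" using assms deg_NK by auto
    have le: "0 \<le> deg G l" "deg G l \<le> deg G l + d" by (simp_all add: le_fun_def)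
    define t where "t = y (deg G l, deg G l + d)"
    have e: "y (0, deg G l + d) = cmp G (y (0, deg G l)) t"
      unfolding t_def by (rule ip_cmp[OF yi]) (use NK le assms in simp_all)
    have F: "t \<in> mor G" "deg G t = d" "rng G t = src G l"
      unfolding t_def using ip_facts[OF yi NK _ le(2)] ip_facts[OF yi NK_0 NK le(1)] NK assms y0
      by (simp_all add: fun_eq_iff)
    have "deg G (cmp G l t) = deg G l + d" using F assms by simp
    then have "y \<in> cyl k G (cmp G l t)" using yi e y0 unfolding cyl_def by simp
    then show "y \<in> (\<Union>t\<in>{t\<in>paths_of_deg G d. rng G t = src G l}. cyl k G (cmp G l t))"
      using F unfolding paths_of_deg_def by auto
  qed
qed

lemma left_cancel:
  assumes "l \<in> mor G" "t1 \<in> mor G" "t2 \<in> mor G" "src G l = rng G t1" "src G l = rng G t2"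
    "cmp G l t1 = cmp G l t2" "deg G t1 = deg G t2"
  shows "t1 = t2"
  using conjunct2[OF fact_unique[OF assms(1,2,4,1,3,5,6) refl assms(7)]] .

lemma measure_decomp:
  assumes "l \<in> mor G" "d \<in> NK k"
  shows "measure M (cyl k G l) = (\<Sum>t\<in>{t\<in>paths_of_deg G d. rng G t = src G l}. measure M (cyl k G (cmp G l t)))"
proof -
  let ?T = "{t\<in>paths_of_deg G d. rng G t = src G l}"
  have "finite (paths_of_deg G d)" using fin unfolding finite_kgraph_def by blast
  then have fT: "finite ?T" by (rule rev_finite_subset) auto
  have "measure M (\<Union>t\<in>?T. cyl k G (cmp G l t)) = (\<Sum>t\<in>?T. measure M (cyl k G (cmp G l t)))"
  proof (rule P.finite_measure_finite_Union[OF fT])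
    show "(\<lambda>t. cyl k G (cmp G l t)) ` ?T \<subseteq> sets M"
    proof (rule image_subsetI)
      fix t assume "t \<in> ?T"
      then show "cyl k G (cmp G l t) \<in> sets M" using assms(1) by (intro cyl_sets) (simp add: paths_of_deg_def)
    qed
    show "disjoint_family_on (\<lambda>t. cyl k G (cmp G l t)) ?T"
      unfolding disjoint_family_on_def
    proof (intro ballI impI)
      fix t1 t2 assume t: "t1 \<in> ?T" "t2 \<in> ?T" "t1 \<noteq> t2"
      then have tt: "t1 \<in> mor G" "t2 \<in> mor G" "rng G t1 = src G l" "rng G t2 = src G l" "deg G t1 = d" "deg G t2 = d"
        unfolding paths_of_deg_def by simp_all
      then have "cmp G l t1 \<noteq> cmp G l t2" using left_cancel[of l t1 t2] assms(1) t(3) by metis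
      moreover have "deg G (cmp G l t1) = deg G (cmp G l t2)" using tt assms(1) by simp
      ultimately show "cyl k G (cmp G l t1) \<inter> cyl k G (cmp G l t2) = {}" by (rule cyl_disj[rotated])
    qed
  qed
  then show ?thesis by (subst cyl_decomp[OF assms])
qed


lemma finite_verts: "finite (verts G)"
proof -
  have "finite (paths_of_deg G 0)" using fin unfolding finite_kgraph_def by blast
  moreover have "verts G \<subseteq> paths_of_deg G 0"
  proof
    fix v assume "v \<in> verts G"
    then have "v \<in> mor G" "rng G v = v" by (simp_all add: verts_iff)
    then show "v \<in> paths_of_deg G 0" unfolding paths_of_deg_def using deg_rng[of v] by simp
  qed
  ultimately show ?thesis by (rule rev_finite_subset)
qed

lemma x_nonneg: "v \<in> verts G \<Longrightarrow> 0 \<le> x v" and sum_x: "(\<Sum>v\<in>verts G. x v) = 1"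
  using PF unfolding is_PF_vector_def by auto

lemma ex_pos: "\<exists>u\<in>verts G. 0 < x u"
proof (rule ccontr)
  assume "\<not> ?thesis"
  then have "\<forall>v\<in>verts G. x v = 0" using x_nonneg by force
  then have "(\<Sum>v\<in>verts G. x v) = 0" by simp
  then show False using sum_x by simp
qed

lemma decomp_vert:
  assumes u: "u \<in> verts G" and d: "d \<in> NK k"
  shows "x u = cf d * (\<Sum>t\<in>{t\<in>paths_of_deg G d. rng G t = u}. x (src G t))"
proof -
  have um: "u \<in> mor G" "rng G u = u" using u by (simp_all add: verts_iff)
  have su: "src G u = u" using src_rng[OF um(1)] um(2) by simp
  have "x u = measure M (cyl k G u)" using MZ[OF um(1)] deg_rng[OF um(1)] um su cf_0 by simp
  also have "\<dots> = (\<Sum>t\<in>{t\<in>paths_of_deg G d. rng G t = u}. measure M (cyl k G (cmp G u t)))"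
    using measure_decomp[OF um(1) d] su by simp
  also have "\<dots> = (\<Sum>t\<in>{t\<in>paths_of_deg G d. rng G t = u}. cf d * x (src G t))"
  proof (rule sum.cong[OF refl])
    fix t assume "t \<in> {t\<in>paths_of_deg G d. rng G t = u}"
    then have t: "t \<in> mor G" "rng G t = u" "deg G t = d" unfolding paths_of_deg_def by simp_all
    have "cmp G u t = t" using cmp_rng[OF t(1)] t(2) by simp
    then show "measure M (cyl k G (cmp G u t)) = cf d * x (src G t)" using MZ[OF t(1)] t(3) by simp
  qed
  also have "\<dots> = cf d * (\<Sum>t\<in>{t\<in>paths_of_deg G d. rng G t = u}. x (src G t))"
    by (simp add: sum_distrib_left)
  finally show ?thesis .
qed

lemma cf_pos: assumes d: "d \<in> NK k" shows "0 < cf d"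
proof -
  obtain u where u: "u \<in> verts G" "0 < x u" using ex_pos by blast
  have "0 \<le> (\<Sum>t\<in>{t\<in>paths_of_deg G d. rng G t = u}. x (src G t))"
    by (rule sum_nonneg) (auto simp: paths_of_deg_def intro!: x_nonneg)
  moreover have "0 < cf d * (\<Sum>t\<in>{t\<in>paths_of_deg G d. rng G t = u}. x (src G t))"
    using decomp_vert[OF u(1) d] u(2) by simp
  ultimately show ?thesis using zero_less_mult_pos2 by (metis mult_nonneg_nonpos2 not_less mult.commute less_eq_real_def)
qed

lemma x_pos: assumes w: "w \<in> verts G" shows "0 < x w"
proof -
  obtain u where u: "u \<in> verts G" "0 < x u" using ex_pos by blast
  obtain \<tau> where \<tau>: "\<tau> \<in> mor G" "rng G \<tau> = w" "src G \<tau> = u" using sc w u unfolding strongly_connected_def by blast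
  define d where "d = deg G \<tau>"
  have d: "d \<in> NK k" unfolding d_def using deg_NK[OF \<tau>(1)] .
  have "finite (paths_of_deg G d)" using fin unfolding finite_kgraph_def by blast
  then have fT: "finite {t\<in>paths_of_deg G d. rng G t = w}" by (rule rev_finite_subset) auto
  have mem: "\<tau> \<in> {t\<in>paths_of_deg G d. rng G t = w}" using \<tau> unfolding paths_of_deg_def d_def by simp
  have "x (src G \<tau>) \<le> (\<Sum>t\<in>{t\<in>paths_of_deg G d. rng G t = w}. x (src G t))"
  proof (rule member_le_sum[OF mem _ fT])
    fix t assume "t \<in> {t\<in>paths_of_deg G d. rng G t = w} - {\<tau>}"
    then show "0 \<le> x (src G t)" by (intro x_nonneg) (simp add: paths_of_deg_def)
  qed
  then have "x u \<le> (\<Sum>t\<in>{t\<in>paths_of_deg G d. rng G t = w}. x (src G t))" using \<tau>(3) by simp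
  then have "0 < (\<Sum>t\<in>{t\<in>paths_of_deg G d. rng G t = w}. x (src G t))" using u(2) by linarith
  then show ?thesis using decomp_vert[OF w d] cf_pos[OF d] by simp
qed


definition "xmin = Min (x ` verts G)"
definition "xmax = Max (x ` verts G)"

lemma verts_ne: "verts G \<noteq> {}" using sum_x by auto

lemma xmin_le: "v \<in> verts G \<Longrightarrow> xmin \<le> x v"
  unfolding xmin_def using finite_verts by (intro Min_le) auto

lemma xmax_ge: "v \<in> verts G \<Longrightarrow> x v \<le> xmax"
  unfolding xmax_def using finite_verts by (intro Max_ge) auto

lemma xmin_pos: "0 < xmin"
proof -
  have "xmin \<in> x ` verts G" unfolding xmin_def using finite_verts verts_ne by (intro Min_in) auto
  then show ?thesis using x_pos by auto
qed

lemma xmax_pos: "0 < xmax"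
  using verts_ne xmax_ge x_pos by (meson all_not_in_conv less_le_trans)

lemma ratio:
  assumes l: "l \<in> mor G" and t: "t \<in> mor G" and c: "src G l = rng G t"
  shows "cf (deg G t) * xmin / xmax * measure M (cyl k G l) \<le> measure M (cyl k G (cmp G l t))"
proof -
  have m1: "measure M (cyl k G l) = cf (deg G l) * x (src G l)" using MZ[OF l] .
  have m2: "measure M (cyl k G (cmp G l t)) = cf (deg G l) * cf (deg G t) * x (src G t)"
    using MZ[of "cmp G l t"] l t c cf_add by simp
  have p1: "0 < cf (deg G l)" "0 < cf (deg G t)" using cf_pos deg_NK l t by auto
  have a1: "x (src G l) \<le> xmax" "xmin \<le> x (src G t)" using xmax_ge xmin_le l t by auto
  have "cf (deg G t) * xmin / xmax * measure M (cyl k G l) = (cf (deg G l) * cf (deg G t) * xmin) * (x (src G l) / xmax)"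
    unfolding m1 by (simp add: field_simps)
  also have "\<dots> \<le> (cf (deg G l) * cf (deg G t) * xmin) * 1"
    using p1 xmin_pos xmax_pos a1 by (intro mult_left_mono) simp_all
  also have "\<dots> \<le> cf (deg G l) * cf (deg G t) * x (src G t)"
    using p1 a1 by simp
  finally show ?thesis unfolding m2 .
qed

lemma Lmin_prefix:
  assumes mors: "P \<in> mor G" "Q \<in> mor G" "l0 \<in> mor G" and c: "src G P = rng G l0" "src G Q = rng G l0"
    and ne: "Lmin G (cmp G P l0) (cmp G Q l0) \<noteq> {}"
  shows "Lmin G P Q \<noteq> {}"
proof -
  obtain \<alpha> \<beta> where ab: "\<alpha> \<in> mor G" "\<beta> \<in> mor G" "src G (cmp G P l0) = rng G \<alpha>" "src G (cmp G Q l0) = rng G \<beta>"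
    "cmp G (cmp G P l0) \<alpha> = cmp G (cmp G Q l0) \<beta>"
    "deg G (cmp G (cmp G P l0) \<alpha>) = (\<lambda>i. max (deg G (cmp G P l0) i) (deg G (cmp G Q l0) i))"
    using ne unfolding Lmin_def by auto
  have ra: "rng G \<alpha> = src G l0" "rng G \<beta> = src G l0" using ab(3,4) mors c by simp_all
  define D1 where "D1 = (\<lambda>i. max (deg G P i) (deg G Q i) - deg G P i)"
  define D2 where "D2 = (\<lambda>i. max (deg G P i) (deg G Q i) - deg G Q i)"
  have E1: "deg G P + deg G l0 + deg G \<alpha> = (\<lambda>i. max (deg G P i + deg G l0 i) (deg G Q i + deg G l0 i))"
    using mors c ra ab(1,2) ab(6) by (simp add: add.assoc)
  have E2: "deg G Q + deg G l0 + deg G \<beta> = (\<lambda>i. max (deg G P i + deg G l0 i) (deg G Q i + deg G l0 i))"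
  proof -
    have "deg G (cmp G (cmp G Q l0) \<beta>) = (\<lambda>i. max (deg G (cmp G P l0) i) (deg G (cmp G Q l0) i))"
      using ab(6) unfolding ab(5) .
    then show ?thesis using mors c ra ab(1,2) by (simp add: add.assoc)
  qed
  have dal: "deg G \<alpha> = D1"
  proof
    fix i have "deg G P i + deg G l0 i + deg G \<alpha> i = max (deg G P i + deg G l0 i) (deg G Q i + deg G l0 i)"
      using fun_cong[OF E1, of i] by simp
    then show "deg G \<alpha> i = D1 i" unfolding D1_def by linarith
  qed
  have dbe: "deg G \<beta> = D2"
  proof
    fix i have "deg G Q i + deg G l0 i + deg G \<beta> i = max (deg G P i + deg G l0 i) (deg G Q i + deg G l0 i)"
      using fun_cong[OF E2, of i] by simp
    then show "deg G \<beta> i = D2 i" unfolding D2_def by linarith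
  qed
  have "cmp G l0 \<alpha> \<in> mor G" "deg G (cmp G l0 \<alpha>) = D1 + deg G l0" using mors ab ra dal by (simp_all add: add.commute)
  then obtain \<alpha>' r1 where A: "\<alpha>' \<in> mor G" "r1 \<in> mor G" "src G \<alpha>' = rng G r1" "deg G \<alpha>' = D1" "deg G r1 = deg G l0"
    "cmp G \<alpha>' r1 = cmp G l0 \<alpha>" by (rule fact_exists)
  have "cmp G l0 \<beta> \<in> mor G" "deg G (cmp G l0 \<beta>) = D2 + deg G l0" using mors ab ra dbe by (simp_all add: add.commute)
  then obtain \<beta>' r2 where B: "\<beta>' \<in> mor G" "r2 \<in> mor G" "src G \<beta>' = rng G r2" "deg G \<beta>' = D2" "deg G r2 = deg G l0"
    "cmp G \<beta>' r2 = cmp G l0 \<beta>" by (rule fact_exists)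
  have ra': "rng G \<alpha>' = rng G l0" using rng_cmp[OF A(1,2,3)] A(6) rng_cmp[of l0 \<alpha>] mors ab ra by simp
  have rb': "rng G \<beta>' = rng G l0" using rng_cmp[OF B(1,2,3)] B(6) rng_cmp[of l0 \<beta>] mors ab ra by simp
  have "cmp G (cmp G P \<alpha>') r1 = cmp G P (cmp G l0 \<alpha>)" using A ra' mors c by (simp flip: A(6))
  also have "\<dots> = cmp G (cmp G P l0) \<alpha>" using mors c ab ra by simp
  also have "\<dots> = cmp G (cmp G Q l0) \<beta>" by (rule ab(5))
  also have "\<dots> = cmp G Q (cmp G l0 \<beta>)" using mors c ab ra by simp
  also have "\<dots> = cmp G (cmp G Q \<beta>') r2" using B rb' mors c by (simp flip: B(6))
  finally have eq: "cmp G (cmp G P \<alpha>') r1 = cmp G (cmp G Q \<beta>') r2" .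
  have dd: "deg G (cmp G P \<alpha>') = (\<lambda>i. max (deg G P i) (deg G Q i))" "deg G (cmp G Q \<beta>') = (\<lambda>i. max (deg G P i) (deg G Q i))"
    using A B ra' rb' mors c unfolding D1_def D2_def by (auto simp: fun_eq_iff)
  have "cmp G P \<alpha>' = cmp G Q \<beta>'"
    using fact_unique[of "cmp G P \<alpha>'" r1 "cmp G Q \<beta>'" r2] A B ra' rb' mors c eq dd by simp
  then have "(\<alpha>', \<beta>') \<in> Lmin G P Q" unfolding Lmin_def using A B ra' rb' c dd by simp
  then show ?thesis by blast
qed


theorem main:
  fixes g :: "nat \<Rightarrow> int"
  assumes g: "g \<in> ZK k" "g \<notin> Per k G"
  shows "\<exists>a K. a \<in> NK k \<and> a \<noteq> 0 \<and> 0 < K \<and> K < 1 \<and>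
     (\<forall>\<mu>\<in>mor G. \<forall>\<nu>\<in>mor G. src G \<mu> = src G \<nu> \<longrightarrow>
        (\<lambda>i. int (deg G \<mu> i) - int (deg G \<nu> i)) = g \<longrightarrow>
        (\<forall>j::nat. measure M (\<Union>{cyl k G (cmp G \<mu> l) | l.
              l \<in> paths_of_deg G (\<lambda>i. j * a i) \<and> rng G l = src G \<mu> \<and>
              Lmin G (cmp G \<mu> l) (cmp G \<nu> l) \<noteq> {}})
           \<le> K ^ j * measure M (cyl k G \<mu>)))"
proof -
  define m where "m = (\<lambda>i. nat (g i))"
  define n where "n = (\<lambda>i. nat (- g i))"
  have mNK: "m \<in> NK k" and nNK: "n \<in> NK k" using g(1) unfolding m_def n_def NK_def ZK_def by auto
  have gm: "\<And>i. int (m i) - int (n i) = g i" unfolding m_def n_def by simp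
  have "\<exists>y\<in>inf_paths k G. shift k m y \<noteq> shift k n y"
  proof (rule ccontr)
    assume "\<not> ?thesis"
    then have "\<forall>y\<in>inf_paths k G. shift k m y = shift k n y" by blast
    moreover have "g = (\<lambda>i. int (m i) - int (n i))" using gm by (simp add: fun_eq_iff)
    ultimately have "g \<in> Per k G" unfolding Per_def using mNK nNK by blast
    then show False using g(2) by simp
  qed
  then obtain y where y: "y \<in> inf_paths k G" "shift k m y \<noteq> shift k n y" by blast
  have mn: "m \<noteq> n" using y(2) by auto
  obtain \<gamma>1 \<rho>1 \<xi>1 \<gamma>2 \<rho>2 \<xi>2 where W: "\<gamma>1 \<in> mor G" "\<rho>1 \<in> mor G" "\<xi>1 \<in> mor G"
     "\<gamma>2 \<in> mor G" "\<rho>2 \<in> mor G" "\<xi>2 \<in> mor G"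
     "src G \<gamma>1 = rng G \<rho>1" "src G \<rho>1 = rng G \<xi>1" "src G \<gamma>2 = rng G \<rho>2" "src G \<rho>2 = rng G \<xi>2"
     "cmp G \<gamma>1 (cmp G \<rho>1 \<xi>1) = cmp G \<gamma>2 (cmp G \<rho>2 \<xi>2)"
     "deg G \<gamma>1 + n = deg G \<gamma>2 + m" "deg G \<rho>1 = deg G \<rho>2" "\<rho>1 \<noteq> \<rho>2"
    using witness[OF y(1) mNK nNK y(2)] by blast
  define \<eta> where "\<eta> = cmp G \<gamma>1 (cmp G \<rho>1 \<xi>1)"
  have \<eta>: "\<eta> \<in> mor G" "rng G \<eta> = rng G \<gamma>1" "src G \<eta> = src G \<xi>1" "deg G \<eta> = deg G \<gamma>1 + (deg G \<rho>1 + deg G \<xi>1)"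
    unfolding \<eta>_def using W(1-10) by simp_all
  have \<eta>2: "deg G \<eta> = deg G \<gamma>2 + (deg G \<rho>2 + deg G \<xi>2)"
  proof -
    have "deg G (cmp G \<gamma>2 (cmp G \<rho>2 \<xi>2)) = deg G \<gamma>2 + (deg G \<rho>2 + deg G \<xi>2)" using W(4,5,6,9,10) by simp
    then show ?thesis unfolding \<eta>_def W(11) .
  qed
  have ex\<beta>: "\<And>v. v \<in> verts G \<Longrightarrow> \<exists>b. b \<in> mor G \<and> rng G b = v \<and> src G b = rng G \<eta>"
    using sc \<eta>(1) unfolding strongly_connected_def by (meson rng_verts)
  define \<beta> where "\<beta> = (\<lambda>v. SOME b. b \<in> mor G \<and> rng G b = v \<and> src G b = rng G \<eta>)"
  have \<beta>: "\<And>v. v \<in> verts G \<Longrightarrow> \<beta> v \<in> mor G \<and> rng G (\<beta> v) = v \<and> src G (\<beta> v) = rng G \<eta>"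
    unfolding \<beta>_def by (rule someI_ex) (rule ex\<beta>)
  define a where "a = (\<Sum>v\<in>verts G. deg G (\<beta> v)) + deg G \<eta>"
  have aNK: "a \<in> NK k"
  proof -
    have "(\<Sum>v\<in>verts G. deg G (\<beta> v)) \<in> NK k"
      unfolding NK_def using \<beta> deg_NK by (auto simp: sum_fun_apply NK_def intro!: sum.neutral)
    then show ?thesis unfolding a_def using deg_NK[OF \<eta>(1)] by simp
  qed
  have ale: "\<And>v. v \<in> verts G \<Longrightarrow> deg G (\<beta> v) + deg G \<eta> \<le> a"
  proof -
    fix v assume v: "v \<in> verts G"
    have "deg G (\<beta> v) \<le> (\<Sum>v\<in>verts G. deg G (\<beta> v))"
      unfolding le_fun_def sum_fun_apply using v finite_verts by (auto intro!: member_le_sum)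
    then show "deg G (\<beta> v) + deg G \<eta> \<le> a" unfolding a_def by (simp add: add_right_mono)
  qed
  have ex\<xi>: "\<And>v. v \<in> verts G \<Longrightarrow> \<exists>\<xi>. \<xi> \<in> mor G \<and> rng G \<xi> = src G \<eta> \<and> deg G \<xi> = a - (deg G (\<beta> v) + deg G \<eta>)"
  proof -
    fix v assume v: "v \<in> verts G"
    have "a - (deg G (\<beta> v) + deg G \<eta>) \<in> NK k" using aNK unfolding NK_def by simp
    then show "\<exists>\<xi>. \<xi> \<in> mor G \<and> rng G \<xi> = src G \<eta> \<and> deg G \<xi> = a - (deg G (\<beta> v) + deg G \<eta>)"
      using path_exists[OF conv sc] \<eta>(1) by (meson src_verts)
  qed
  define \<xi> where "\<xi> = (\<lambda>v. SOME t. t \<in> mor G \<and> rng G t = src G \<eta> \<and> deg G t = a - (deg G (\<beta> v) + deg G \<eta>))"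
  have \<xi>: "\<And>v. v \<in> verts G \<Longrightarrow> \<xi> v \<in> mor G \<and> rng G (\<xi> v) = src G \<eta> \<and> deg G (\<xi> v) = a - (deg G (\<beta> v) + deg G \<eta>)"
    unfolding \<xi>_def by (rule someI_ex) (rule ex\<xi>)
  define lp where "lp = (\<lambda>v. cmp G (\<beta> v) (cmp G \<eta> (\<xi> v)))"
  have lp: "\<And>v. v \<in> verts G \<Longrightarrow> lp v \<in> mor G \<and> rng G (lp v) = v \<and> deg G (lp v) = a"
  proof -
    fix v assume v: "v \<in> verts G"
    note B = \<beta>[OF v] and X = \<xi>[OF v]
    have "deg G (lp v) = deg G (\<beta> v) + deg G \<eta> + (a - (deg G (\<beta> v) + deg G \<eta>))"
      unfolding lp_def using B X \<eta>(1) by (simp add: add.assoc)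
    also have "\<dots> = a" using ale[OF v] by (simp add: le_fun_def fun_eq_iff)
    finally show "lp v \<in> mor G \<and> rng G (lp v) = v \<and> deg G (lp v) = a"
      unfolding lp_def using B X \<eta>(1) by simp
  qed
  have a0: "a \<noteq> 0"
  proof
    assume a0: "a = 0"
    obtain v where v: "v \<in> verts G" using verts_ne by blast
    have "deg G \<eta> = 0" using ale[OF v] a0 by (auto simp: le_fun_def fun_eq_iff)
    then have "deg G \<gamma>1 = 0" "deg G \<gamma>2 = 0" using \<eta>(4) \<eta>2 by (auto simp: fun_eq_iff)
    then have "m = n" using W(12) by simp
    then show False using mn by simp
  qed
  define \<delta> where "\<delta> = cf a * xmin / xmax"
  have \<delta>: "0 < \<delta>" unfolding \<delta>_def using cf_pos[OF aNK] xmin_pos xmax_pos by simp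
  define K where "K = max (1/2) (1 - \<delta>)"
  have K: "0 < K" "K < 1" "1 - \<delta> \<le> K" unfolding K_def using \<delta> by auto
  show ?thesis
  proof (intro exI[of _ a] exI[of _ K] conjI aNK a0 K(1) K(2) ballI impI allI)
    fix \<mu> \<nu> j assume \<mu>: "\<mu> \<in> mor G" and \<nu>: "\<nu> \<in> mor G" and s\<mu>\<nu>: "src G \<mu> = src G \<nu>"
      and dg: "(\<lambda>i. int (deg G \<mu> i) - int (deg G \<nu> i)) = g"
    show "measure M (\<Union>{cyl k G (cmp G \<mu> l) | l.
              l \<in> paths_of_deg G (\<lambda>i. j * a i) \<and> rng G l = src G \<mu> \<and>
              Lmin G (cmp G \<mu> l) (cmp G \<nu> l) \<noteq> {}})
           \<le> K ^ j * measure M (cyl k G \<mu>)"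
    proof -
    have dgi: "\<And>i. int (deg G \<mu> i) - int (deg G \<nu> i) = g i" using dg by (simp add: fun_eq_iff)
    have dgc: "deg G \<mu> + deg G \<gamma>2 = deg G \<nu> + deg G \<gamma>1"
    proof
      fix i
      have "deg G \<gamma>1 i + n i = deg G \<gamma>2 i + m i" using fun_cong[OF W(12), of i] by simp
      then show "(deg G \<mu> + deg G \<gamma>2) i = (deg G \<nu> + deg G \<gamma>1) i" using dgi[of i] gm[of i] by simp
    qed
    have key: "\<And>l. l \<in> mor G \<Longrightarrow> rng G l = src G \<mu> \<Longrightarrow>
        Lmin G (cmp G \<mu> (cmp G l (lp (src G l)))) (cmp G \<nu> (cmp G l (lp (src G l)))) = {}"
    proof (rule ccontr)
      fix l assume l: "l \<in> mor G" "rng G l = src G \<mu>"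
        and ne: "Lmin G (cmp G \<mu> (cmp G l (lp (src G l)))) (cmp G \<nu> (cmp G l (lp (src G l)))) \<noteq> {}"
      define v where "v = src G l"
      have v: "v \<in> verts G" unfolding v_def using l by simp
      note B = \<beta>[OF v] and X = \<xi>[OF v] and LP = lp[OF v]
      obtain \<alpha> \<alpha>2 where ab: "\<alpha> \<in> mor G" "\<alpha>2 \<in> mor G"
        "src G (cmp G \<mu> (cmp G l (lp v))) = rng G \<alpha>" "src G (cmp G \<nu> (cmp G l (lp v))) = rng G \<alpha>2"
        "cmp G (cmp G \<mu> (cmp G l (lp v))) \<alpha> = cmp G (cmp G \<nu> (cmp G l (lp v))) \<alpha>2"
        using ne unfolding Lmin_def v_def by auto
      have sl: "src G (lp v) = src G (\<xi> v)" unfolding lp_def using B X \<eta>(1) by simp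
      have ra: "rng G \<alpha> = src G (\<xi> v)" "rng G \<alpha>2 = src G (\<xi> v)" 
        using ab(3,4) \<mu> \<nu> l LP s\<mu>\<nu> v_def sl by simp_all
      have Z: "cmp G \<mu> (cmp G (cmp G l (\<beta> v)) (cmp G (cmp G \<gamma>1 (cmp G \<rho>1 \<xi>1)) (cmp G (\<xi> v) \<alpha>))) =
          cmp G \<nu> (cmp G (cmp G l (\<beta> v)) (cmp G (cmp G \<gamma>1 (cmp G \<rho>1 \<xi>1)) (cmp G (\<xi> v) \<alpha>2)))"
      proof -
        have "cmp G (cmp G \<mu> (cmp G l (lp v))) \<alpha> = cmp G \<mu> (cmp G (cmp G l (\<beta> v)) (cmp G \<eta> (cmp G (\<xi> v) \<alpha>)))"
          unfolding lp_def using \<mu> l B X \<eta>(1) ab(1) ra v_def by simp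
        moreover have "cmp G (cmp G \<nu> (cmp G l (lp v))) \<alpha>2 = cmp G \<nu> (cmp G (cmp G l (\<beta> v)) (cmp G \<eta> (cmp G (\<xi> v) \<alpha>2)))"
          unfolding lp_def using \<nu> l B X \<eta>(1) ab(2) ra v_def s\<mu>\<nu> by simp
        ultimately show ?thesis using ab(5) unfolding \<eta>_def by simp
      qed
      have "\<rho>1 = \<rho>2"
      proof (rule core[OF \<mu> \<nu> _ _ _ W(1-6) _ _ _ W(7-10) _ _ W(11) Z dgc W(13)])
        show "cmp G l (\<beta> v) \<in> mor G" "cmp G (\<xi> v) \<alpha> \<in> mor G" "cmp G (\<xi> v) \<alpha>2 \<in> mor G"
          using l B X ab ra v_def by simp_all
        show "src G \<mu> = rng G (cmp G l (\<beta> v))" "src G \<nu> = rng G (cmp G l (\<beta> v))"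
          "src G (cmp G l (\<beta> v)) = rng G \<gamma>1" "src G \<xi>1 = rng G (cmp G (\<xi> v) \<alpha>)" "src G \<xi>1 = rng G (cmp G (\<xi> v) \<alpha>2)"
          using l B X ab ra v_def \<eta> s\<mu>\<nu> by simp_all
      qed
      then show False using W(14) by simp
    qed
    define S where "S j = {l. l \<in> paths_of_deg G (\<lambda>i. j * a i) \<and> rng G l = src G \<mu> \<and>
              Lmin G (cmp G \<mu> l) (cmp G \<nu> l) \<noteq> {}}" for j
    define U where "U j = \<Union>{cyl k G (cmp G \<mu> l) | l.
              l \<in> paths_of_deg G (\<lambda>i. j * a i) \<and> rng G l = src G \<mu> \<and>
              Lmin G (cmp G \<mu> l) (cmp G \<nu> l) \<noteq> {}}" for j
    have UE: "U j = (\<Union>l\<in>S j. cyl k G (cmp G \<mu> l))" for j unfolding U_def S_def by blast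
    have Smor: "l \<in> mor G \<and> rng G l = src G \<mu> \<and> deg G l = (\<lambda>i. j * a i)" if "l \<in> S j" for l j
      using that unfolding S_def paths_of_deg_def by simp
    have fS: "finite (S j)" for j
    proof -
      have "finite (paths_of_deg G (\<lambda>i. j * a i))" using fin unfolding finite_kgraph_def by blast
      then show ?thesis unfolding S_def by (rule rev_finite_subset) auto
    qed
    have cs: "cyl k G (cmp G \<mu> l) \<in> sets M" if "l \<in> S j" for l j
      using Smor[OF that] \<mu> by (intro cyl_sets) simp
    have mU: "measure M (U j) = (\<Sum>l\<in>S j. measure M (cyl k G (cmp G \<mu> l)))" for j
      unfolding UE
    proof (rule P.finite_measure_finite_Union[OF fS])
      show "(\<lambda>l. cyl k G (cmp G \<mu> l)) ` S j \<subseteq> sets M" using cs by blast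
      show "disjoint_family_on (\<lambda>l. cyl k G (cmp G \<mu> l)) (S j)"
        unfolding disjoint_family_on_def
      proof (intro ballI impI)
        fix l1 l2 assume l: "l1 \<in> S j" "l2 \<in> S j" "l1 \<noteq> l2"
        note L1 = Smor[OF l(1)] and L2 = Smor[OF l(2)]
        have "cmp G \<mu> l1 \<noteq> cmp G \<mu> l2" using left_cancel[of \<mu> l1 l2] \<mu> L1 L2 l(3) by metis
        moreover have "deg G (cmp G \<mu> l1) = deg G (cmp G \<mu> l2)" using L1 L2 \<mu> by simp
        ultimately show "cyl k G (cmp G \<mu> l1) \<inter> cyl k G (cmp G \<mu> l2) = {}" by (rule cyl_disj[rotated])
      qed
    qed
    have step: "measure M (U (Suc j)) \<le> (1 - \<delta>) * measure M (U j)" for j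
    proof -
      define D where "D l = cyl k G (cmp G \<mu> l) - cyl k G (cmp G \<mu> (cmp G l (lp (src G l))))" for l
      have Dfacts: "D l \<in> sets M \<and> measure M (D l) \<le> (1 - \<delta>) * measure M (cyl k G (cmp G \<mu> l))" if l: "l \<in> S j" for l
      proof -
        note L = Smor[OF l]
        define v where "v = src G l"
        have v: "v \<in> verts G" unfolding v_def using L by simp
        note LP = lp[OF v]
        have eq: "cmp G \<mu> (cmp G l (lp v)) = cmp G (cmp G \<mu> l) (lp v)" using \<mu> L LP v_def by simp
        have m1: "cmp G \<mu> l \<in> mor G" "src G (cmp G \<mu> l) = rng G (lp v)" using \<mu> L LP v_def by simp_all
        have sub: "cyl k G (cmp G \<mu> (cmp G l (lp v))) \<subseteq> cyl k G (cmp G \<mu> l)"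
          unfolding eq by (rule cyl_sub[OF m1(1) _ m1(2)]) (use LP in simp)
        have s2: "cyl k G (cmp G \<mu> (cmp G l (lp v))) \<in> sets M" unfolding eq using m1 LP by (intro cyl_sets) simp
        have r: "\<delta> * measure M (cyl k G (cmp G \<mu> l)) \<le> measure M (cyl k G (cmp G \<mu> (cmp G l (lp v))))"
          unfolding eq \<delta>_def using ratio[OF m1(1) _ m1(2)] LP by simp
        have "D l = cyl k G (cmp G \<mu> l) - cyl k G (cmp G \<mu> (cmp G l (lp v)))" unfolding D_def v_def ..
        moreover have "measure M (cyl k G (cmp G \<mu> l) - cyl k G (cmp G \<mu> (cmp G l (lp v)))) =
            measure M (cyl k G (cmp G \<mu> l)) - measure M (cyl k G (cmp G \<mu> (cmp G l (lp v))))"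
          by (rule P.finite_measure_Diff[OF cs[OF l] s2 sub])
        ultimately show ?thesis using r cs[OF l] s2 by (simp add: algebra_simps)
      qed
      have sub: "U (Suc j) \<subseteq> (\<Union>l\<in>S j. D l)"
      proof
        fix z assume "z \<in> U (Suc j)"
        then obtain l2 where l2: "l2 \<in> S (Suc j)" and z: "z \<in> cyl k G (cmp G \<mu> l2)" unfolding UE by blast
        note L2 = Smor[OF l2]
        have "deg G l2 = (\<lambda>i. j * a i) + a" using L2 by (simp add: fun_eq_iff)
        then obtain l l0 where F: "l \<in> mor G" "l0 \<in> mor G" "src G l = rng G l0" "deg G l = (\<lambda>i. j * a i)"
          "deg G l0 = a" "cmp G l l0 = l2" using L2 by (metis fact_exists)
        have rl: "rng G l = src G \<mu>" using rng_cmp[OF F(1-3)] F(6) L2 by simp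
        have ne2: "Lmin G (cmp G \<mu> l2) (cmp G \<nu> l2) \<noteq> {}" using l2 unfolding S_def by simp
        have e1: "cmp G \<mu> l2 = cmp G (cmp G \<mu> l) l0" "cmp G \<nu> l2 = cmp G (cmp G \<nu> l) l0"
          using F \<mu> \<nu> rl s\<mu>\<nu> by (auto simp flip: F(6))
        have "Lmin G (cmp G \<mu> l) (cmp G \<nu> l) \<noteq> {}"
        proof (rule Lmin_prefix[of "cmp G \<mu> l" "cmp G \<nu> l" l0])
          show "Lmin G (cmp G (cmp G \<mu> l) l0) (cmp G (cmp G \<nu> l) l0) \<noteq> {}" using ne2 unfolding e1 .
        qed (use F(1-5) \<mu> \<nu> rl s\<mu>\<nu> in simp_all)
        then have lS: "l \<in> S j" unfolding S_def paths_of_deg_def using F rl by simp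
        define v where "v = src G l"
        have v: "v \<in> verts G" unfolding v_def using F by simp
        note LP = lp[OF v]
        have zin: "z \<in> cyl k G (cmp G \<mu> l)"
        proof -
          have "cyl k G (cmp G \<mu> l2) \<subseteq> cyl k G (cmp G \<mu> l)" unfolding e1(1)
            by (rule cyl_sub) (use F(1-5) \<mu> rl in simp_all)
          then show ?thesis using z by blast
        qed
        have znot: "z \<notin> cyl k G (cmp G \<mu> (cmp G l (lp v)))"
        proof
          assume z2: "z \<in> cyl k G (cmp G \<mu> (cmp G l (lp v)))"
          have dd: "deg G (cmp G \<mu> l2) = deg G (cmp G \<mu> (cmp G l (lp v)))"
            using F \<mu> rl LP v_def by (simp flip: F(6))
          have "cmp G \<mu> l2 = cmp G \<mu> (cmp G l (lp v))"
            using cyl_disj[OF dd] z z2 by blast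
          moreover have lpm: "cmp G l (lp v) \<in> mor G" "src G \<mu> = rng G (cmp G l (lp v))"
            using F(1) LP v_def rl by simp_all
          moreover have "deg G l2 = deg G (cmp G l (lp v))"
          proof -
            have "deg G (cmp G l l0) = deg G l + a" using F(1-5) by simp
            moreover have "deg G (cmp G l (lp v)) = deg G l + a" using F(1) LP v_def by simp
            ultimately show ?thesis using F(6) by simp
          qed
          moreover have "src G \<mu> = rng G l2" using L2 by simp
          ultimately have "l2 = cmp G l (lp v)"
            using left_cancel[of \<mu> l2 "cmp G l (lp v)"] \<mu> L2 by blast
          then have "Lmin G (cmp G \<mu> (cmp G l (lp (src G l)))) (cmp G \<nu> (cmp G l (lp (src G l)))) \<noteq> {}"
            using ne2 v_def by simp
          then show False using key[OF F(1) rl] by simp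
        qed
        show "z \<in> (\<Union>l\<in>S j. D l)" using lS zin znot unfolding D_def v_def by blast
      qed
      have Us: "(\<Union>l\<in>S j. D l) \<in> sets M" using Dfacts fS by (intro sets.finite_UN) auto
      have "measure M (U (Suc j)) \<le> measure M (\<Union>l\<in>S j. D l)" by (rule P.finite_measure_mono[OF sub Us])
      also have "\<dots> \<le> (\<Sum>l\<in>S j. measure M (D l))"
        by (rule P.finite_measure_subadditive_finite[OF fS]) (use Dfacts in blast)
      also have "\<dots> \<le> (\<Sum>l\<in>S j. (1 - \<delta>) * measure M (cyl k G (cmp G \<mu> l)))"
        by (rule sum_mono) (use Dfacts in blast)
      also have "\<dots> = (1 - \<delta>) * measure M (U j)" unfolding mU by (simp add: sum_distrib_left)
      finally show ?thesis .
    qed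
    have claim: "measure M (U j) \<le> K ^ j * measure M (cyl k G \<mu>)" for j
    proof (induction j)
      case 0
      have "U 0 \<subseteq> cyl k G \<mu>"
      proof
        fix z assume "z \<in> U 0"
        then obtain l where l: "l \<in> S 0" and z: "z \<in> cyl k G (cmp G \<mu> l)" unfolding UE by blast
        note L = Smor[OF l]
        have "deg G l = 0" using L by (simp add: fun_eq_iff)
        then have "l = rng G l" using deg0 L by blast
        then have "cmp G \<mu> l = \<mu>" using L \<mu> by (metis cmp_src)
        then show "z \<in> cyl k G \<mu>" using z by simp
      qed
      then show ?case using P.finite_measure_mono cyl_sets[OF \<mu>] by simp
    next
      case (Suc j)
      have "measure M (U (Suc j)) \<le> (1 - \<delta>) * measure M (U j)" by (rule step)
      also have "\<dots> \<le> K * measure M (U j)" using K(3) by (intro mult_right_mono) simp_all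
      also have "\<dots> \<le> K * (K ^ j * measure M (cyl k G \<mu>))" using Suc.IH K(1) by (intro mult_left_mono) simp_all
      finally show ?case by simp
    qed
    show ?thesis using claim[of j] unfolding U_def .
    qed
  qed
qed

end

theorem lemma8p4:
  fixes k :: nat and G :: "'a kgraph" and x :: "'a \<Rightarrow> real"
    and M :: "((nat \<Rightarrow> nat) \<times> (nat \<Rightarrow> nat) \<Rightarrow> 'a) measure" and g :: "nat \<Rightarrow> int"
  assumes kg: "is_kgraph k G" and conv: "standing_conv k G"
    and fin: "finite_kgraph G" and sc: "strongly_connected G"
    and PF: "is_PF_vector k G x"
    and prob: "prob_space M"
    and spaceM: "space M = inf_paths k G"
    and setsM: "sets M = path_borel_sets k G"
    and MZ: "\<And>l. l \<in> mor G \<Longrightarrow>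
       measure M (cyl k G l) = (\<Prod>i<k. inverse (rho G i) ^ deg G l i) * x (src G l)"
    and g: "g \<in> ZK k" "g \<notin> Per k G"
  shows "\<exists>a K. a \<in> NK k \<and> a \<noteq> 0 \<and> 0 < K \<and> K < 1 \<and>
     (\<forall>\<mu>\<in>mor G. \<forall>\<nu>\<in>mor G. src G \<mu> = src G \<nu> \<longrightarrow>
        (\<lambda>i. int (deg G \<mu> i) - int (deg G \<nu> i)) = g \<longrightarrow>
        (\<forall>j::nat. measure M (\<Union>{cyl k G (cmp G \<mu> l) | l.
              l \<in> paths_of_deg G (\<lambda>i. j * a i) \<and> rng G l = src G \<mu> \<and>
              Lmin G (cmp G \<mu> l) (cmp G \<nu> l) \<noteq> {}})
           \<le> K ^ j * measure M (cyl k G \<mu>)))"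
  proof -
  have "kgm k G x M"
    by (intro kgm.intro kgr.intro kgm_axioms.intro) (fact kg conv fin sc PF prob spaceM setsM MZ)+
  then interpret kgm k G x M .
  show ?thesis by (rule main[OF g])
qed

end
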